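(* Let $T$ be a unital completely positive map on $M_n(\mathbb{C})$ written as $T(x)=\sum_{i=1}^d a_ixa_i^*$ ($x\in M_n(\mathbb{C})$) for some $d\in\mathbb{N}$ and $a_i\in M_n(\mathbb{C})$. (1) If $a_i^t=a_i$ for all $1\leq i\leq d$, then $F(T)=W_n^+$. (2) If $a_i^t=-a_i$ for all $1\leq i\leq d$, then $F(T)=W_n^-$.
   Context: Here $n\geq 2$ and $a^t$ denotes the transpose. For $u\in\mathcal{U}(n)$ let $\rho_u(T)=\mathrm{ad}(u)\,T\,\mathrm{ad}(u^t)$ with $\mathrm{ad}(v)(x)=vxv^*$; the twirling map is $F(T)=\int_{\mathcal{U}(n)}\rho_u(T)\,du$ (Haar probability measure). The Holevo–Werner channels are $W_n^+(x)=\frac{1}{n+1}(\mathrm{Tr}_n(x)1_n+x^t)$ and $W_n^-(x)=\frac{1}{n-1}(\mathrm{Tr}_n(x)1_n-x^t)$, $\mathrm{Tr}_n$ the non-normalized trace. *)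

theory Defs
  imports "HOL-Analysis.Analysis" "HOL-Probability.Probability_Measure"
begin

text \<open>n x n complex matrices are modelled as complex^'n^'n, with n = CARD('n).\<close>

definition cadj :: "complex^'n^'n \<Rightarrow> complex^'n^'n" where
  "cadj A = (\<chi> i j. cnj (A $ j $ i))"

definition unitary_mat :: "complex^'n^'n \<Rightarrow> bool" where
  "unitary_mat u \<longleftrightarrow> u ** cadj u = mat 1 \<and> cadj u ** u = mat 1"

definition mtrace :: "complex^'n^'n \<Rightarrow> complex" where
  "mtrace A = (\<Sum>i\<in>UNIV. A $ i $ i)"

definition ad :: "complex^'n^'n \<Rightarrow> complex^'n^'n \<Rightarrow> complex^'n^'n" where
  "ad v x = v ** x ** cadj v"

text \<open>Haar probability measure on the unitary group U(n), viewed as a Borel probability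
  measure on the space of all n x n complex matrices concentrated on U(n) and invariant
  under left multiplication by unitaries.  (It exists and is unique.)\<close>
definition haar_unitary :: "(complex^'n^'n) measure \<Rightarrow> bool" where
  "haar_unitary \<mu> \<longleftrightarrow> prob_space \<mu> \<and> sets \<mu> = sets borel \<and>
     (AE u in \<mu>. unitary_mat u) \<and>
     (\<forall>v. unitary_mat v \<longrightarrow> distr \<mu> borel (\<lambda>u. v ** u) = \<mu>)"

definition twirl :: "(complex^'n^'n) measure \<Rightarrow> (complex^'n^'n \<Rightarrow> complex^'n^'n)
    \<Rightarrow> complex^'n^'n \<Rightarrow> complex^'n^'n" where
  "twirl \<mu> T x = integral\<^sup>L \<mu> (\<lambda>u. (ad u \<circ> T \<circ> ad (transpose u)) x)"

definition W_plus :: "complex^'n^'n \<Rightarrow> complex^'n^'n" where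
  "W_plus x = (1 / (real CARD('n) + 1)) *\<^sub>R (mat (mtrace x) + transpose x)"

definition W_minus :: "complex^'n^'n \<Rightarrow> complex^'n^'n" where
  "W_minus x = (1 / (real CARD('n) - 1)) *\<^sub>R (mat (mtrace x) - transpose x)"

end

theory Submission
  imports Defs
begin


definition E :: "'n::finite \<Rightarrow> 'n \<Rightarrow> complex^'n^'n" where
  "E j k = (\<chi> p q. if p = j \<and> q = k then 1 else 0)"

lemma E_nth: "E j k $ p $ q = (if p = j \<and> q = k then 1 else 0)"
  by (simp add: E_def)

lemma mmult_nth: "(A ** B) $ i $ j = (\<Sum>k\<in>UNIV. A $ i $ k * B $ k $ j)"
  by (simp add: matrix_matrix_mult_def)

lemma cadj_nth[simp]: "cadj A $ i $ j = cnj (A $ j $ i)"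
  by (simp add: cadj_def)

lemma transpose_nth[simp]: "transpose A $ i $ j = A $ j $ i"
  by (simp add: transpose_def)

lemma mat_nth: "mat c $ i $ j = (if i = j then c else 0)"
  by (simp add: mat_def)

lemma cadj_mult: "cadj (A ** B) = cadj B ** (cadj A :: complex^'n^'n)"
  by (simp add: vec_eq_iff mmult_nth mult.commute)

lemma cadj_transpose: "cadj (transpose A) = transpose (cadj (A::complex^'n^'n))"
  by (simp add: vec_eq_iff)

lemma triple_nth: "(A ** X ** C) $ p $ q = (\<Sum>r\<in>UNIV. \<Sum>s\<in>UNIV. A$p$r * X$r$s * C$s$q)"
proof -
  have "(A ** X ** C) $ p $ q = (\<Sum>s\<in>UNIV. (\<Sum>r\<in>UNIV. A$p$r * X$r$s) * C$s$q)"
    by (simp add: mmult_nth)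
  also have "... = (\<Sum>s\<in>UNIV. \<Sum>r\<in>UNIV. A$p$r * X$r$s * C$s$q)"
    by (simp add: sum_distrib_right)
  also have "... = (\<Sum>r\<in>UNIV. \<Sum>s\<in>UNIV. A$p$r * X$r$s * C$s$q)"
    by (rule sum.swap)
  finally show ?thesis .
qed

lemma mult_sum_right: "(A::complex^'n^'n) ** sum F I = (\<Sum>i\<in>I. A ** F i)"
proof (induction I rule: infinite_finite_induct)
  case (insert x F) then show ?case by (simp add: matrix_add_ldistrib)
qed auto

lemma mat_add_rdistrib: "(A + B) ** (C::complex^'n^'n) = A ** C + B ** C"
  by (simp add: vec_eq_iff mmult_nth distrib_right sum.distrib)

lemma mult_sum_left: "sum F I ** (A::complex^'n^'n) = (\<Sum>i\<in>I. F i ** A)"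
proof (induction I rule: infinite_finite_induct)
  case (insert x F) then show ?case by (simp add: mat_add_rdistrib)
qed auto

definition fT :: "(complex^'n^'n \<Rightarrow> complex^'n^'n) \<Rightarrow> complex^'n^'n \<Rightarrow> complex^'n^'n \<Rightarrow> complex^'n^'n" where
  "fT T x u = (ad u \<circ> T \<circ> ad (transpose u)) x"

lemma twirl_fT: "twirl \<mu> T x = integral\<^sup>L \<mu> (fT T x)"
  by (simp add: twirl_def fT_def[abs_def])

lemma fT_shift:
  "v ** fT T (transpose v ** x ** cadj (transpose v)) u ** cadj v = fT T x (v ** u)"
  by (simp add: fT_def ad_def matrix_transpose_mul cadj_mult matrix_mul_assoc)

lemma fT_sum:
  assumes "\<And>x. T x = (\<Sum>i\<in>I. a i ** x ** cadj (a i))"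
  shows "fT T x u = (\<Sum>i\<in>I. (u ** a i ** transpose u) ** x ** cadj (u ** a i ** transpose u))"
  by (simp add: fT_def ad_def assms mult_sum_left mult_sum_right cadj_mult matrix_mul_assoc)

lemma norm_vec_le_sum: "norm (x::'a::real_normed_vector^'n) \<le> (\<Sum>i\<in>UNIV. norm (x$i))"
  unfolding norm_vec_def by (rule L2_set_le_sum) auto

lemma unitary_entry_le:
  assumes "unitary_mat u" shows "norm (u $ p $ q) \<le> 1"
proof -
  have "(u ** cadj u) $ p $ p = 1" using assms by (simp add: unitary_mat_def mat_nth)
  then have "(\<Sum>k\<in>UNIV. u$p$k * cnj (u$p$k)) = 1" by (simp add: mmult_nth)
  moreover have "(\<Sum>k\<in>UNIV. complex_of_real ((norm (u$p$k))\<^sup>2)) = (\<Sum>k\<in>UNIV. u$p$k * cnj (u$p$k))"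
    by (simp only: complex_norm_square)
  ultimately have "complex_of_real (\<Sum>k\<in>UNIV. (norm (u$p$k))\<^sup>2) = complex_of_real 1"
    by (simp only: of_real_sum of_real_1)
  then have s: "(\<Sum>k\<in>UNIV. (norm (u$p$k))\<^sup>2) = 1" using of_real_eq_iff by blast
  have "(norm (u$p$q))\<^sup>2 \<le> (\<Sum>k\<in>UNIV. (norm (u$p$k))\<^sup>2)"
    by (rule member_le_sum) auto
  then have "(norm (u$p$q))\<^sup>2 \<le> 1\<^sup>2" using s by simp
  then show ?thesis by (rule power2_le_imp_le) simp
qed

lemma compact_K: "compact {u::complex^'n^'n. \<forall>p q. norm (u$p$q) \<le> 1}"
proof -
  have "closed {u::complex^'n^'n. \<forall>p q. norm (u$p$q) \<le> 1}"
    by (intro closed_Collect_all closed_Collect_le continuous_intros)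
  moreover have "bounded {u::complex^'n^'n. \<forall>p q. norm (u$p$q) \<le> 1}"
    unfolding bounded_iff
  proof (intro exI ballI)
    fix u :: "complex^'n^'n" assume u: "u \<in> {u. \<forall>p q. norm (u$p$q) \<le> 1}"
    have "norm u \<le> (\<Sum>p\<in>UNIV. norm (u$p))" by (rule norm_vec_le_sum)
    also have "... \<le> (\<Sum>p\<in>UNIV. \<Sum>q\<in>UNIV. norm (u$p$q))"
      by (intro sum_mono norm_vec_le_sum)
    also have "... \<le> (\<Sum>p\<in>(UNIV::'n set). \<Sum>q\<in>(UNIV::'n set). 1)"
      using u by (intro sum_mono) auto
    finally show "norm u \<le> (\<Sum>p\<in>(UNIV::'n set). \<Sum>q\<in>(UNIV::'n set). 1::real)" .
  qed
  ultimately show ?thesis using compact_eq_bounded_closed by blast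
qed

lemma haar_integrable:
  fixes h :: "complex^'n^'n \<Rightarrow> 'b::{banach,second_countable_topology}"
  assumes haar: "haar_unitary \<mu>" and c: "continuous_on UNIV h"
  shows "integrable \<mu> h"
proof -
  let ?K = "{u::complex^'n^'n. \<forall>p q. norm (u$p$q) \<le> 1}"
  have ps: "prob_space \<mu>" and sets: "sets \<mu> = sets borel" and ae: "AE u in \<mu>. unitary_mat u"
    using haar by (auto simp: haar_unitary_def)
  have "compact (h ` ?K)"
    by (rule compact_continuous_image[OF continuous_on_subset[OF c] compact_K]) auto
  then have "bounded (h ` ?K)" by (rule compact_imp_bounded)
  then obtain B where "\<forall>y\<in>h ` ?K. norm y \<le> B" unfolding bounded_iff by blast
  then have B: "\<And>u. u \<in> ?K \<Longrightarrow> norm (h u) \<le> B" by blast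
  have meas: "h \<in> borel_measurable \<mu>"
    using borel_measurable_continuous_onI[OF c] measurable_cong_sets[OF sets refl] by blast
  have "AE u in \<mu>. norm (h u) \<le> B"
    using ae
  proof eventually_elim
    case (elim u)
    then have "u \<in> ?K" using unitary_entry_le by blast
    then show ?case using B by blast
  qed
  then show ?thesis
    by (rule finite_measure.integrable_const_bound[OF prob_space.finite_measure[OF ps] _ meas])
qed

lemma cont_entry: "continuous_on UNIV (\<lambda>u::complex^'n^'n. u $ p $ q)"
  by (intro continuous_intros)



lemma cont_mmult[continuous_intros]:
  fixes f g :: "'a::topological_space \<Rightarrow> complex^'n^'n"
  assumes "continuous_on S f" "continuous_on S g"
  shows "continuous_on S (\<lambda>u. f u ** g u)"
  unfolding matrix_matrix_mult_def by (intro continuous_intros assms)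

lemma cont_cadj[continuous_intros]:
  fixes f :: "'a::topological_space \<Rightarrow> complex^'n^'n"
  assumes "continuous_on S f"
  shows "continuous_on S (\<lambda>u. cadj (f u))"
  unfolding cadj_def by (intro continuous_intros assms)

lemma cont_transpose[continuous_intros]:
  fixes f :: "'a::topological_space \<Rightarrow> complex^'n^'n"
  assumes "continuous_on S f"
  shows "continuous_on S (\<lambda>u. transpose (f u))"
  unfolding transpose_def by (intro continuous_intros assms)

lemma sum_delta2: "(\<Sum>r\<in>(UNIV::'n::finite set). \<Sum>s\<in>(UNIV::'n set). if r = j \<and> s = k then c else (0::'a::comm_monoid_add)) = c"
proof -
  have "\<And>r. (\<Sum>s\<in>(UNIV::'n set). if r = j \<and> s = k then c else 0) = (if r = j then c else 0)"
    by (case_tac "r = j") simp_all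
  then show ?thesis by simp
qed

lemma E_triple: "(A ** E j k ** C) $ p $ q = A $ p $ j * C $ k $ q"
  by (simp add: triple_nth E_nth if_distrib if_distribR sum_delta2 cong: if_cong)

lemma bl_entry: "bounded_linear (\<lambda>M::complex^'n^'n. M $ p $ q)"
  using bounded_linear_compose[OF bounded_linear_vec_nth bounded_linear_vec_nth] .

lemma bl_conj: "bounded_linear (\<lambda>M::complex^'n^'n. (v::complex^'n^'n) ** M ** (C::complex^'n^'n))"
proof -
  have "linear (\<lambda>M::complex^'n^'n. v ** M ** C)"
    by (rule linearI) (simp_all add: matrix_add_ldistrib mat_add_rdistrib matrix_scalar_ac scalar_matrix_assoc)
  then show ?thesis using linear_conv_bounded_linear by blast
qed

lemma bl_msum_entry:
  "(\<Sum>i\<in>I. B i ** x ** cadj (B i)) $ p $ q =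
     (\<Sum>j\<in>UNIV. \<Sum>k\<in>UNIV. x $ j $ k * (\<Sum>i\<in>I. B i ** E j k ** cadj (B i)) $ p $ q)"
proof -
  have "(\<Sum>i\<in>I. B i ** x ** cadj (B i)) $ p $ q
      = (\<Sum>i\<in>I. \<Sum>j\<in>UNIV. \<Sum>k\<in>UNIV. x $ j $ k * (B i $ p $ j * cnj (B i $ q $ k)))"
    by (simp add: triple_nth mult_ac)
  also have "... = (\<Sum>j\<in>UNIV. \<Sum>i\<in>I. \<Sum>k\<in>UNIV. x $ j $ k * (B i $ p $ j * cnj (B i $ q $ k)))"
    by (rule sum.swap)
  also have "... = (\<Sum>j\<in>UNIV. \<Sum>k\<in>UNIV. \<Sum>i\<in>I. x $ j $ k * (B i $ p $ j * cnj (B i $ q $ k)))"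
    by (rule sum.cong[OF refl], rule sum.swap)
  also have "... = (\<Sum>j\<in>UNIV. \<Sum>k\<in>UNIV. x $ j $ k * (\<Sum>i\<in>I. B i ** E j k ** cadj (B i)) $ p $ q)"
    by (simp add: E_triple sum_distrib_left)
  finally show ?thesis .
qed



context
  fixes \<mu> :: "(complex^'n^'n) measure" and T :: "complex^'n^'n \<Rightarrow> complex^'n^'n"
    and a :: "nat \<Rightarrow> complex^'n^'n" and d :: nat
  assumes haar: "haar_unitary \<mu>"
    and Tdef: "\<And>x. T x = (\<Sum>i\<in>{1..d}. a i ** x ** cadj (a i))"
begin

lemma cont_fT: "continuous_on UNIV (fT T x)"
proof -
  have "fT T x = (\<lambda>u. \<Sum>i\<in>{1..d}. (u ** a i ** transpose u) ** x ** cadj (u ** a i ** transpose u))"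
    using fT_sum[OF Tdef] by blast
  then show ?thesis
    by (simp only:) (intro continuous_intros)
qed

lemma int_fT: "integrable \<mu> (fT T x)"
  by (rule haar_integrable[OF haar cont_fT])

lemma int_fT_entry: "integrable \<mu> (\<lambda>u. fT T x u $ p $ q)"
  by (rule haar_integrable[OF haar]) (intro continuous_intros cont_fT)

lemma G_entry: "twirl \<mu> T x $ p $ q = (\<integral>u. fT T x u $ p $ q \<partial>\<mu>)"
  unfolding twirl_fT
  by (rule integral_bounded_linear[OF bl_entry int_fT, symmetric])

lemma fT_lin: "fT T x u $ p $ q = (\<Sum>j\<in>UNIV. \<Sum>k\<in>UNIV. x $ j $ k * fT T (E j k) u $ p $ q)"
  unfolding fT_sum[OF Tdef] by (rule bl_msum_entry)

lemma G_lin: "twirl \<mu> T x $ p $ q = (\<Sum>j\<in>UNIV. \<Sum>k\<in>UNIV. x $ j $ k * twirl \<mu> T (E j k) $ p $ q)"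
proof -
  have "twirl \<mu> T x $ p $ q = (\<integral>u. fT T x u $ p $ q \<partial>\<mu>)"
    by (rule G_entry)
  also have "... = (\<integral>u. (\<Sum>j\<in>UNIV. \<Sum>k\<in>UNIV. x $ j $ k * fT T (E j k) u $ p $ q) \<partial>\<mu>)"
    by (rule Bochner_Integration.integral_cong[OF refl fT_lin])
  also have "... = (\<Sum>j\<in>UNIV. \<Sum>k\<in>UNIV. x $ j $ k * (\<integral>u. fT T (E j k) u $ p $ q \<partial>\<mu>))"
    by (simp add: integral_sum int_fT_entry integrable_sum)
  finally show ?thesis by (simp add: G_entry)
qed

lemma covariance:
  assumes v: "unitary_mat v"
  shows "v ** twirl \<mu> T (transpose v ** x ** cadj (transpose v)) ** cadj v = twirl \<mu> T x"
proof -
  have sets: "sets \<mu> = sets borel" and inv: "distr \<mu> borel (\<lambda>u. v ** u) = \<mu>"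
    using haar v by (auto simp: haar_unitary_def)
  have mv: "(\<lambda>u. v ** u) \<in> measurable \<mu> borel"
  proof -
    have c: "continuous_on UNIV (\<lambda>u::complex^'n^'n. v ** u)"
      by (intro cont_mmult continuous_on_const continuous_on_id)
    have "(\<lambda>u::complex^'n^'n. v ** u) \<in> borel_measurable borel"
      by (rule borel_measurable_continuous_onI[OF c])
    then show ?thesis using measurable_cong_sets[OF sets refl] by blast
  qed
  have mf: "fT T x \<in> borel_measurable borel"
    by (rule borel_measurable_continuous_onI[OF cont_fT])
  have "v ** twirl \<mu> T (transpose v ** x ** cadj (transpose v)) ** cadj v
      = (\<integral>u. v ** fT T (transpose v ** x ** cadj (transpose v)) u ** cadj v \<partial>\<mu>)"
    unfolding twirl_fT by (rule integral_bounded_linear[OF bl_conj int_fT, symmetric])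
  also have "... = (\<integral>u. fT T x (v ** u) \<partial>\<mu>)"
    by (simp only: fT_shift)
  also have "... = integral\<^sup>L (distr \<mu> borel (\<lambda>u. v ** u)) (fT T x)"
    by (rule integral_distr[OF mv mf, symmetric])
  also have "... = twirl \<mu> T x"
    unfolding inv twirl_fT ..
  finally show ?thesis .
qed

lemma unital:
  assumes "T (mat 1) = mat 1"
  shows "twirl \<mu> T (mat 1) = mat 1"
proof -
  have ps: "prob_space \<mu>" and ae: "AE u in \<mu>. unitary_mat u"
    using haar by (auto simp: haar_unitary_def)
  have "AE u in \<mu>. fT T (mat 1) u = mat 1"
    using ae
  proof eventually_elim
    case (elim u)
    have "transpose u ** cadj (transpose u) = transpose (cadj u ** u)"
      by (simp add: cadj_transpose matrix_transpose_mul)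
    also have "... = mat 1" using elim by (simp add: unitary_mat_def)
    finally have "ad (transpose u) (mat 1) = mat 1" by (simp add: ad_def)
    then have "fT T (mat 1) u = ad u (T (mat 1))" by (simp add: fT_def)
    also have "... = mat 1" using elim assms by (simp add: ad_def unitary_mat_def)
    finally show ?case .
  qed
  then have "integral\<^sup>L \<mu> (fT T (mat 1)) = integral\<^sup>L \<mu> (\<lambda>u. mat 1)"
    by (intro integral_cong_AE) (simp_all add: borel_measurable_integrable[OF int_fT])
  also have "... = mat 1" using prob_space.prob_space[OF ps] by simp
  finally show ?thesis by (simp add: twirl_fT)
qed

lemma choi_sym:
  assumes sym: "\<forall>i\<in>{1..d}. transpose (a i) = e *\<^sub>R a i"
  shows "twirl \<mu> T (E j k) $ p $ q = of_real e * (twirl \<mu> T (E p k) $ j $ q)"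
proof -
  have pt: "fT T (E j k) u $ p $ q = of_real e * (fT T (E p k) u $ j $ q)" for u
  proof -
    define B where "B i = u ** a i ** transpose u" for i
    have tr: "B i $ p $ j = of_real e * (B i $ j $ p)" if "i \<in> {1..d}" for i
    proof -
      have "transpose (B i) = u ** transpose (a i) ** transpose u"
        by (simp add: B_def matrix_transpose_mul matrix_mul_assoc)
      also have "... = e *\<^sub>R B i"
        using sym that by (simp add: B_def matrix_scalar_ac scalar_matrix_assoc)
      finally have "transpose (B i) $ j $ p = (e *\<^sub>R B i) $ j $ p"
        by simp
      then have "B i $ p $ j = e *\<^sub>R (B i $ j $ p)" by (simp only: transpose_nth vector_scaleR_component)
      then show ?thesis by (simp add: scaleR_conv_of_real)
    qed
    have "fT T (E j k) u $ p $ q = (\<Sum>i\<in>{1..d}. B i $ p $ j * cnj (B i $ q $ k))"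
      unfolding fT_sum[OF Tdef] sum_component E_triple cadj_nth B_def ..
    also have "... = (\<Sum>i\<in>{1..d}. of_real e * (B i $ j $ p * cnj (B i $ q $ k)))"
      by (rule sum.cong) (simp_all add: tr)
    also have "... = of_real e * (\<Sum>i\<in>{1..d}. B i $ j $ p * cnj (B i $ q $ k))"
      by (simp only: sum_distrib_left)
    also have "(\<Sum>i\<in>{1..d}. B i $ j $ p * cnj (B i $ q $ k)) = fT T (E p k) u $ j $ q"
      unfolding fT_sum[OF Tdef] sum_component E_triple cadj_nth B_def ..
    finally show ?thesis .
  qed
  show ?thesis
    unfolding G_entry pt by simp
qed

end


lemma if_zero_mult_left: "(if P then a else 0) * (b::'a::mult_zero) = (if P then a * b else 0)" by simp
lemma if_zero_mult_right: "(b::'a::mult_zero) * (if P then a else 0) = (if P then b * a else 0)" by simp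

definition diag :: "('n::finite \<Rightarrow> complex) \<Rightarrow> complex^'n^'n" where
  "diag \<theta> = (\<chi> r s. if r = s then \<theta> r else 0)"

lemma diag_nth: "diag \<theta> $ r $ s = (if r = s then \<theta> r else 0)"
  by (simp add: diag_def)

lemma diag_mult_left: "(diag \<theta> ** X) $ r $ s = \<theta> r * X $ r $ s"
  by (simp add: mmult_nth diag_nth if_zero_mult_left sum.delta)

lemma diag_mult_right: "(X ** diag \<theta>) $ r $ s = X $ r $ s * \<theta> s"
  by (simp add: mmult_nth diag_nth if_zero_mult_right sum.delta')

lemma diag_transpose: "transpose (diag \<theta>) = diag \<theta>"
  by (simp add: vec_eq_iff diag_nth)

lemma diag_cadj: "cadj (diag \<theta>) = diag (\<lambda>r. cnj (\<theta> r))"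
  by (simp add: vec_eq_iff diag_nth)

lemma diag_unitary:
  assumes "\<And>r. \<theta> r * cnj (\<theta> r) = 1"
  shows "unitary_mat (diag \<theta>)"
  unfolding unitary_mat_def diag_cadj
  by (simp add: vec_eq_iff diag_mult_left diag_nth mat_nth assms mult.commute)

lemma sum_one:
  assumes "\<And>t. t \<noteq> r \<Longrightarrow> F t = 0"
  shows "(\<Sum>t\<in>(UNIV::'n::finite set). F t) = F r"
proof -
  have "(\<Sum>t\<in>UNIV. F t) = (\<Sum>t\<in>{r}. F t)"
    by (rule sum.mono_neutral_right) (auto simp: assms)
  then show ?thesis by simp
qed

lemma sum_two:
  assumes "j \<noteq> k" and "\<And>t. t \<noteq> j \<Longrightarrow> t \<noteq> k \<Longrightarrow> F t = 0"
  shows "(\<Sum>t\<in>(UNIV::'n::finite set). F t) = F j + F k"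
proof -
  have "(\<Sum>t\<in>UNIV. F t) = (\<Sum>t\<in>{j,k}. F t)"
    by (rule sum.mono_neutral_right) (auto simp: assms)
  then show ?thesis using assms(1) by simp
qed

definition hh :: complex where "hh = complex_of_real (1 / sqrt 2)"

lemma hh_sq: "hh * hh = 1/2"
proof -
  have "hh * hh = complex_of_real ((1 / sqrt 2) * (1 / sqrt 2))" by (simp only: hh_def of_real_mult)
  also have "(1 / sqrt 2) * (1 / sqrt 2) = 1 / (sqrt 2 * sqrt 2)" by simp
  also have "sqrt 2 * sqrt 2 = (2::real)" by simp
  finally show ?thesis by simp
qed

lemma hh_cnj: "cnj hh = hh" by (simp add: hh_def)

definition rot :: "'n::finite \<Rightarrow> 'n \<Rightarrow> complex^'n^'n" where
  "rot j k = (\<chi> r s. if r = j then (if s = j then hh else if s = k then hh else 0)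
      else if r = k then (if s = j then hh else if s = k then - hh else 0)
      else if r = s then 1 else 0)"

lemma rot_nth: "rot j k $ r $ s = (if r = j then (if s = j then hh else if s = k then hh else 0)
      else if r = k then (if s = j then hh else if s = k then - hh else 0)
      else if r = s then 1 else 0)"
  by (simp add: rot_def)

lemma rot_sym: "j \<noteq> k \<Longrightarrow> rot j k $ r $ s = rot j k $ s $ r"
  by (auto simp: rot_nth)

lemma rot_sum:
  assumes "j \<noteq> k"
  shows "(\<Sum>t\<in>UNIV. rot j k $ r $ t * f t) =
    (if r = j then hh * f j + hh * f k else if r = k then hh * f j - hh * f k else f r)"
proof (cases "r = j \<or> r = k")
  case True
  then have "(\<Sum>t\<in>UNIV. rot j k $ r $ t * f t) = rot j k $ r $ j * f j + rot j k $ r $ k * f k"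
    by (intro sum_two assms) (auto simp: rot_nth)
  then show ?thesis using True assms by (auto simp: rot_nth)
next
  case False
  then have "(\<Sum>t\<in>UNIV. rot j k $ r $ t * f t) = rot j k $ r $ r * f r"
    by (intro sum_one) (auto simp: rot_nth)
  then show ?thesis using False by (auto simp: rot_nth)
qed

lemma rot_transpose: "j \<noteq> k \<Longrightarrow> transpose (rot j k) = rot j k"
  by (simp add: vec_eq_iff rot_sym)

lemma rot_cadj: "j \<noteq> k \<Longrightarrow> cadj (rot j k) = rot j k"
  by (simp add: vec_eq_iff rot_sym) (simp add: rot_nth hh_cnj)

lemma rot_sq: "j \<noteq> k \<Longrightarrow> rot j k ** rot j k = mat 1"
  apply (simp add: vec_eq_iff mmult_nth rot_sum mat_nth)
  apply (auto simp: rot_nth hh_sq)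
  done

lemma rot_unitary: "j \<noteq> k \<Longrightarrow> unitary_mat (rot j k)"
  by (simp add: unitary_mat_def rot_cadj rot_sq)



definition gg :: "(complex^'n^'n) measure \<Rightarrow> (complex^'n^'n \<Rightarrow> complex^'n^'n) \<Rightarrow> 'n::finite \<Rightarrow> 'n \<Rightarrow> 'n \<Rightarrow> 'n \<Rightarrow> complex" where
  "gg \<mu> T j k p q = twirl \<mu> T (E j k) $ p $ q"

context
  fixes \<mu> :: "(complex^'n^'n) measure" and T :: "complex^'n^'n \<Rightarrow> complex^'n^'n"
    and a :: "nat \<Rightarrow> complex^'n^'n" and d :: nat
  assumes haar: "haar_unitary \<mu>"
    and Tdef: "\<And>x. T x = (\<Sum>i\<in>{1..d}. a i ** x ** cadj (a i))"
begin

lemma G_lin': "twirl \<mu> T x $ p $ q = (\<Sum>j\<in>UNIV. \<Sum>k\<in>UNIV. x $ j $ k * gg \<mu> T j k p q)"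
  unfolding gg_def by (rule G_lin[OF haar Tdef])

lemma G_E_scaled:
  assumes "\<And>a b. x $ a $ b = (if a = j \<and> b = k then c else 0)"
  shows "twirl \<mu> T x $ r $ s = c * gg \<mu> T j k r s"
proof -
  have "twirl \<mu> T x $ r $ s = (\<Sum>a\<in>UNIV. \<Sum>b\<in>UNIV. if a = j \<and> b = k then c * gg \<mu> T j k r s else 0)"
    unfolding G_lin' assms by (intro sum.cong refl) auto
  then show ?thesis by (simp only: sum_delta2)
qed

lemma phase:
  assumes th: "\<And>r. \<theta> r * cnj (\<theta> r) = 1"
  shows "gg \<mu> T j k p q = \<theta> p * (\<theta> j * cnj (\<theta> k) * gg \<mu> T j k p q) * cnj (\<theta> q)"
proof -
  let ?D = "diag \<theta>"
  let ?x = "transpose ?D ** E j k ** cadj (transpose ?D)"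
  have cov: "?D ** twirl \<mu> T ?x ** cadj ?D = twirl \<mu> T (E j k)"
    by (rule covariance[OF haar Tdef diag_unitary[OF th]])
  have xab: "?x $ a $ b = (if a = j \<and> b = k then \<theta> j * cnj (\<theta> k) else 0)" for a b
    by (simp add: diag_transpose diag_cadj diag_mult_left diag_mult_right E_nth)
  have "gg \<mu> T j k p q = (?D ** twirl \<mu> T ?x ** cadj ?D) $ p $ q"
    unfolding gg_def cov ..
  also have "... = \<theta> p * twirl \<mu> T ?x $ p $ q * cnj (\<theta> q)"
    by (simp add: diag_cadj diag_mult_left diag_mult_right)
  also have "twirl \<mu> T ?x $ p $ q = \<theta> j * cnj (\<theta> k) * gg \<mu> T j k p q"
    by (rule G_E_scaled[OF xab])
  finally show ?thesis .
qed

lemma zero_pattern: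
  assumes "\<not> ((p = q \<and> j = k) \<or> (p = k \<and> j = q))"
  shows "gg \<mu> T j k p q = 0"
proof (rule ccontr)
  assume nz: "gg \<mu> T j k p q \<noteq> 0"
  define th where "th m = (\<lambda>r::'n. if r = m then \<i> else (1::complex))" for m
  have H: "th m p * (th m j * cnj (th m k)) * cnj (th m q) = 1" for m
  proof -
    have u: "\<And>r. th m r * cnj (th m r) = 1" by (simp add: th_def)
    have "gg \<mu> T j k p q * 1 = gg \<mu> T j k p q * (th m p * (th m j * cnj (th m k)) * cnj (th m q))"
      using phase[OF u, of j k p q] by (simp add: mult_ac)
    then have "1 = th m p * (th m j * cnj (th m k)) * cnj (th m q)"
      using mult_left_cancel[OF nz] by blast
    then show ?thesis by simp
  qed
  show False
    using H[of p] H[of q] H[of j] H[of k] assms by (auto simp: th_def split: if_splits)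
qed


lemma rot_eq:
  assumes jk: "j \<noteq> k"
  shows "hh * (hh * gg \<mu> T j j r s + hh * gg \<mu> T j k r s) + hh * (hh * gg \<mu> T k j r s + hh * gg \<mu> T k k r s)
     = (\<Sum>a\<in>UNIV. rot j k $ r $ a * (\<Sum>b\<in>UNIV. rot j k $ s $ b * gg \<mu> T j j a b))"
proof -
  let ?R = "rot j k"
  let ?y = "?R ** E j j ** ?R"
  have "transpose ?R ** ?y ** cadj (transpose ?R) = (?R ** ?R) ** E j j ** (?R ** ?R)"
    by (simp add: rot_transpose rot_cadj jk matrix_mul_assoc)
  also have "... = E j j" by (simp add: rot_sq jk)
  finally have x: "transpose ?R ** ?y ** cadj (transpose ?R) = E j j" .
  have cov: "?R ** twirl \<mu> T (E j j) ** ?R = twirl \<mu> T ?y"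
    using covariance[OF haar Tdef rot_unitary[OF jk], of ?y] unfolding x by (simp add: rot_cadj jk)
  have "twirl \<mu> T ?y $ r $ s = (\<Sum>a\<in>UNIV. \<Sum>b\<in>UNIV. ?R $ j $ a * (?R $ j $ b * gg \<mu> T a b r s))"
    unfolding G_lin' E_triple by (intro sum.cong refl) (simp add: rot_sym[OF jk, of a j for a] mult_ac)
  also have "... = (\<Sum>a\<in>UNIV. ?R $ j $ a * (\<Sum>b\<in>UNIV. ?R $ j $ b * gg \<mu> T a b r s))"
    by (simp add: sum_distrib_left)
  also have "... = hh * (hh * gg \<mu> T j j r s + hh * gg \<mu> T j k r s) + hh * (hh * gg \<mu> T k j r s + hh * gg \<mu> T k k r s)"
    by (simp add: rot_sum jk)
  finally have L: "twirl \<mu> T ?y $ r $ s = hh * (hh * gg \<mu> T j j r s + hh * gg \<mu> T j k r s) + hh * (hh * gg \<mu> T k j r s + hh * gg \<mu> T k k r s)" .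
  have "(?R ** twirl \<mu> T (E j j) ** ?R) $ r $ s = (\<Sum>a\<in>UNIV. \<Sum>b\<in>UNIV. ?R $ r $ a * (?R $ s $ b * gg \<mu> T j j a b))"
    unfolding triple_nth gg_def by (intro sum.cong refl) (simp add: rot_sym[OF jk, of b s for b] mult_ac)
  also have "... = (\<Sum>a\<in>UNIV. ?R $ r $ a * (\<Sum>b\<in>UNIV. ?R $ s $ b * gg \<mu> T j j a b))"
    by (simp add: sum_distrib_left)
  finally show ?thesis using L cov by simp
qed


lemma E1: "j \<noteq> k \<Longrightarrow> gg \<mu> T k j j k = gg \<mu> T j j j j - gg \<mu> T j j k k"
  using rot_eq[of j k j k]
  apply (simp add: rot_sum zero_pattern)
  apply (simp add: ring_distribs mult.assoc[symmetric] hh_sq)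
  done

lemma E2: "j \<noteq> k \<Longrightarrow> gg \<mu> T k k j j = gg \<mu> T j j k k"
  using rot_eq[of j k j j]
  apply (simp add: rot_sum zero_pattern)
  apply (simp add: ring_distribs mult.assoc[symmetric] hh_sq hh_def)
  done

lemma E3: "j \<noteq> k \<Longrightarrow> p \<noteq> j \<Longrightarrow> p \<noteq> k \<Longrightarrow> gg \<mu> T k k p p = gg \<mu> T j j p p"
  using rot_eq[of j k p p]
  apply (simp add: rot_sum zero_pattern)
  apply (simp add: ring_distribs mult.assoc[symmetric] hh_sq)
  apply (simp add: field_simps)
  done

lemma Usum:
  assumes "T (mat 1) = mat 1"
  shows "(\<Sum>j\<in>UNIV. gg \<mu> T j j p p) = 1"
proof -
  have "1 = twirl \<mu> T (mat 1) $ p $ p" using unital[OF haar Tdef assms] by (simp add: mat_nth)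
  also have "... = (\<Sum>j\<in>UNIV. \<Sum>k\<in>UNIV. (if j = k then gg \<mu> T j k p p else 0))"
    unfolding G_lin' by (simp add: mat_nth if_zero_mult_left)
  also have "... = (\<Sum>j\<in>UNIV. gg \<mu> T j j p p)"
    by (simp add: sum.delta)
  finally show ?thesis by simp
qed

end


lemma s1: "(\<Sum>j\<in>UNIV. \<Sum>k\<in>UNIV. (if p = k \<and> q = j then (x::complex^'n^'n) $ j $ k else 0)) = x $ q $ p"
proof -
  have "\<And>j. (\<Sum>k\<in>UNIV. (if p = k \<and> q = j then x $ j $ k else 0)) = (if q = j then x $ j $ p else 0)"
    by (case_tac "j = q") (auto simp: sum.delta)
  then show ?thesis by (simp add: sum.delta)
qed

lemma s2: "(\<Sum>j\<in>UNIV. \<Sum>k\<in>UNIV. (if j = k \<and> p = q then (x::complex^'n^'n) $ j $ k else 0)) = (if p = q then mtrace x else 0)"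
proof -
  have "\<And>j. (\<Sum>k\<in>UNIV. (if j = k \<and> p = q then x $ j $ k else 0)) = (if p = q then x $ j $ j else 0)"
    by (cases "p = q") (simp_all add: sum.delta)
  then show ?thesis by (simp add: mtrace_def)
qed

lemma s3: "(\<Sum>j\<in>UNIV. \<Sum>k\<in>UNIV. (A j k + c * B j k) / (N::complex)) =
   ((\<Sum>j\<in>UNIV. \<Sum>k\<in>(UNIV::'n::finite set). A j k) + c * (\<Sum>j\<in>UNIV. \<Sum>k\<in>UNIV. B j k)) / N"
  by (simp add: sum_divide_distrib[symmetric] sum.distrib sum_distrib_left)

lemma s4: "(x::complex) * (((if P then 1 else 0) + c * (if Q then 1 else 0)) / N) =
   ((if P then x else 0) + c * (if Q then x else 0)) / N"
  by (simp add: algebra_simps)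


context
  fixes \<mu> :: "(complex^'n^'n) measure" and T :: "complex^'n^'n \<Rightarrow> complex^'n^'n"
    and a :: "nat \<Rightarrow> complex^'n^'n" and d :: nat and e :: real
  assumes haar: "haar_unitary \<mu>"
    and Tdef: "\<And>x. T x = (\<Sum>i\<in>{1..d}. a i ** x ** cadj (a i))"
    and Tu: "T (mat 1) = mat 1"
    and sym: "\<forall>i\<in>{1..d}. transpose (a i) = e *\<^sub>R a i"
    and e: "e = 1 \<or> e = -1"
    and card: "CARD('n) \<ge> 2"
begin

lemma Npos: "of_nat CARD('n) + complex_of_real e \<noteq> 0"
proof -
  have h: "real CARD('n) + e \<noteq> 0" using card e by auto
  have "of_nat CARD('n) + complex_of_real e = complex_of_real (real CARD('n) + e)" by simp
  then show ?thesis using h by (metis of_real_eq_0_iff)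
qed

lemma diag_vals:
  "(\<forall>j. j \<noteq> p \<longrightarrow> gg \<mu> T j j p p = 1 / (of_nat CARD('n) + of_real e)) \<and>
   gg \<mu> T p p p p = (1 + of_real e) / (of_nat CARD('n) + of_real e)"
proof -
  let ?N = "of_nat CARD('n) + complex_of_real e"
  have "\<exists>j0::'n. j0 \<noteq> p"
  proof (rule ccontr)
    assume "\<not> ?thesis" then have "UNIV = {p}" by auto
    then have "card (UNIV::'n set) = card {p}" by (rule arg_cong)
    then have "CARD('n) = 1" by simp
    then show False using card by simp
  qed
  then obtain j0 where j0: "j0 \<noteq> p" by blast
  define \<beta> where "\<beta> = gg \<mu> T j0 j0 p p"
  have col: "gg \<mu> T j j p p = \<beta>" if "j \<noteq> p" for j
  proof (cases "j = j0")
    case True then show ?thesis by (simp add: \<beta>_def)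
  next
    case False then show ?thesis
      unfolding \<beta>_def using E3[OF haar Tdef, of j0 j p] that j0 by auto
  qed
  have "(\<Sum>j\<in>UNIV. gg \<mu> T j j p p) = gg \<mu> T p p p p + (\<Sum>j\<in>UNIV - {p}. gg \<mu> T j j p p)"
    by (simp add: sum.remove)
  also have "(\<Sum>j\<in>UNIV - {p}. gg \<mu> T j j p p) = (\<Sum>j\<in>UNIV - {p}. \<beta>)"
    by (rule sum.cong) (auto simp: col)
  also have "... = of_nat (CARD('n) - 1) * \<beta>" by (simp add: card_Diff_singleton)
  finally have U: "gg \<mu> T p p p p + of_nat (CARD('n) - 1) * \<beta> = 1"
    using Usum[OF haar Tdef Tu] by simp
  have e1: "gg \<mu> T j0 p p j0 = gg \<mu> T p p p p - gg \<mu> T p p j0 j0"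
    by (rule E1[OF haar Tdef]) (use j0 in auto)
  have ch: "gg \<mu> T j0 p p j0 = of_real e * gg \<mu> T p p j0 j0"
    unfolding gg_def by (rule choi_sym[OF haar Tdef sym])
  have e2: "gg \<mu> T j0 j0 p p = gg \<mu> T p p j0 j0"
    by (rule E2[OF haar Tdef]) (use j0 in auto)
  have a: "gg \<mu> T p p p p = (1 + of_real e) * \<beta>"
    using e1 ch e2 unfolding \<beta>_def by (simp add: algebra_simps)
  have c1: "of_nat (CARD('n) - 1) = (of_nat CARD('n) - 1 :: complex)"
    using card by (simp add: of_nat_diff)
  have "?N * \<beta> = 1" using U a c1 by (simp add: algebra_simps)
  then have b: "\<beta> = 1 / ?N" using Npos by (simp add: field_simps)
  show ?thesis using col a b by simp
qed

lemma gg_formula: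
  "gg \<mu> T j k p q = ((if j = k \<and> p = q then 1 else 0) + of_real e * (if p = k \<and> q = j then 1 else 0))
      / (of_nat CARD('n) + of_real e)"
proof -
  consider "j = k \<and> p = q \<and> j = p" | "j = k \<and> p = q \<and> j \<noteq> p" | "j \<noteq> k \<and> p = k \<and> q = j"
    | "\<not> ((p = q \<and> j = k) \<or> (p = k \<and> j = q))" by blast
  then show ?thesis
  proof cases
    case 1
    then have "j = p" "k = p" "q = p" by auto
    then show ?thesis using diag_vals[of p] by simp
  next
    case 2
    then have "k = j" "q = p" "j \<noteq> p" by auto
    then show ?thesis using diag_vals[of p] by simp
  next
    case 3
    then have pq: "p = k" "q = j" "j \<noteq> k" by auto
    have "gg \<mu> T j k k j = of_real e * gg \<mu> T k k j j"
      unfolding gg_def by (rule choi_sym[OF haar Tdef sym])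
    then show ?thesis using pq diag_vals[of j] by simp
  next
    case 4
    then have n1: "\<not> (j = k \<and> p = q)" and n2: "\<not> (p = k \<and> q = j)" by auto
    have "gg \<mu> T j k p q = 0" by (rule zero_pattern[OF haar Tdef 4])
    then show ?thesis by (simp only: n1 n2 if_False) simp
  qed
qed

lemma twirl_formula:
  "twirl \<mu> T x $ p $ q = ((if p = q then mtrace x else 0) + of_real e * x $ q $ p)
      / (of_nat CARD('n) + of_real e)"
proof -
  let ?N = "of_nat CARD('n) + complex_of_real e"
  have "twirl \<mu> T x $ p $ q = (\<Sum>j\<in>UNIV. \<Sum>k\<in>UNIV.
      ((if j = k \<and> p = q then x $ j $ k else 0) + of_real e * (if p = k \<and> q = j then x $ j $ k else 0)) / ?N)"
    unfolding G_lin'[OF haar Tdef] gg_formula s4 ..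
  also have "... = ((\<Sum>j\<in>UNIV. \<Sum>k\<in>UNIV. (if j = k \<and> p = q then x $ j $ k else 0))
      + of_real e * (\<Sum>j\<in>UNIV. \<Sum>k\<in>UNIV. (if p = k \<and> q = j then x $ j $ k else 0))) / ?N"
    by (rule s3)
  finally show ?thesis unfolding s1 s2 .
qed

end


theorem corollary4p6:
  fixes T :: "complex^'n^'n \<Rightarrow> complex^'n^'n"
    and a :: "nat \<Rightarrow> complex^'n^'n"
    and d :: nat
    and \<mu> :: "(complex^'n^'n) measure"
  assumes "CARD('n) \<ge> 2"
    and "haar_unitary \<mu>"
    and "\<And>x. T x = (\<Sum>i\<in>{1..d}. a i ** x ** cadj (a i))"
    and "T (mat 1) = mat 1"
  shows "((\<forall>i\<in>{1..d}. transpose (a i) = a i) \<longrightarrow> twirl \<mu> T = W_plus)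
       \<and> ((\<forall>i\<in>{1..d}. transpose (a i) = - a i) \<longrightarrow> twirl \<mu> T = W_minus)"
proof (intro conjI impI)
  assume s: "\<forall>i\<in>{1..d}. transpose (a i) = a i"
  then have s': "\<forall>i\<in>{1..d}. transpose (a i) = 1 *\<^sub>R a i" by simp
  note F = twirl_formula[OF assms(2) assms(3) assms(4) s' _ assms(1)]
  show "twirl \<mu> T = W_plus"
  proof (rule ext, simp only: vec_eq_iff, intro allI)
    fix x :: "complex^'n^'n" and p q
    have c: "complex_of_real (1 / (real CARD('n) + 1)) = 1 / (of_nat CARD('n) + 1)" by simp
    show "twirl \<mu> T x $ p $ q = W_plus x $ p $ q"
      unfolding F[OF disjI1[OF refl]] W_plus_def
      by (simp only: vector_scaleR_component vector_add_component vector_minus_component) (simp add: mat_nth scaleR_conv_of_real c)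
  qed
next
  assume s: "\<forall>i\<in>{1..d}. transpose (a i) = - a i"
  then have s': "\<forall>i\<in>{1..d}. transpose (a i) = (-1) *\<^sub>R a i" by simp
  note F = twirl_formula[OF assms(2) assms(3) assms(4) s' _ assms(1)]
  show "twirl \<mu> T = W_minus"
  proof (rule ext, simp only: vec_eq_iff, intro allI)
    fix x :: "complex^'n^'n" and p q
    have c: "complex_of_real (1 / (real CARD('n) - 1)) = 1 / (of_nat CARD('n) - 1)" by simp
    show "twirl \<mu> T x $ p $ q = W_minus x $ p $ q"
      unfolding F[OF disjI2[OF refl]] W_minus_def
      by (simp only: vector_scaleR_component vector_add_component vector_minus_component) (simp add: mat_nth scaleR_conv_of_real c)
  qed
qed

end
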